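(* Let $A=KQ/I$ be a finite-dimensional gentle algebra and let $B$ be a band for $A$ with an auto-reaching, i.e. there are a finite substring $L$ on top of $B^\infty$ and a finite substring $L'$ at the bottom of $B^\infty$ which are equal as strings (either $L'=L$ or $L'=L^{-1}$ as walks). Then $\ell(L)\le\ell(B)-2$.
   Context: Letters are arrows $\alpha\in Q_1$ (direct letters, traversed from $s(\alpha)$ to $t(\alpha)$) and formal inverses $\alpha^{-1}$ (inverse letters, traversed from $t(\alpha)$ to $s(\alpha)$). A string is a reduced walk (no letter followed by its own inverse) in $Q$ avoiding the relations of $I$ and their inverses; a string is identified with its inverse walk; $\ell$ denotes length (number of letters). A band is a closed walk $B=b_1\cdots b_m$ ($m\ge1$) all of whose powers are strings, considered up to rotation and inversion; $\ell(B)=m$. $B^\infty$ is the bi-infinite walk $\cdots b_1\cdots b_m b_1\cdots b_m\cdots$. A finite consecutive subwalk $L$ of $B^\infty$ (possibly of length $0$) is on top of $B^\infty$ if the letter immediately before $L$ is an inverse letter and the letter immediately after $L$ is a direct letter (i.e. the adjacent arrows point away from $L$); it is at the bottom if the letter immediately before is direct and the letter immediately after is inverse (the adjacent arrows point into $L$). *)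

theory Defs
  imports Main
begin

(* Since gentle algebras are defined by monomial relations of length 2,
   I is given by the set R of pairs (alpha,beta) such that the path
   "alpha then beta" (t alpha = s beta) is a relation. *)

datatype 'a letter = Dir 'a | Inv 'a

fun lsrc :: "('a \<Rightarrow> 'v) \<Rightarrow> ('a \<Rightarrow> 'v) \<Rightarrow> 'a letter \<Rightarrow> 'v" where
  "lsrc s t (Dir a) = s a"
| "lsrc s t (Inv a) = t a"

fun ltgt :: "('a \<Rightarrow> 'v) \<Rightarrow> ('a \<Rightarrow> 'v) \<Rightarrow> 'a letter \<Rightarrow> 'v" where
  "ltgt s t (Dir a) = t a"
| "ltgt s t (Inv a) = s a"

fun linv :: "'a letter \<Rightarrow> 'a letter" where
  "linv (Dir a) = Inv a"
| "linv (Inv a) = Dir a"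

fun is_direct :: "'a letter \<Rightarrow> bool" where
  "is_direct (Dir a) = True"
| "is_direct (Inv a) = False"

fun larrow :: "'a letter \<Rightarrow> 'a" where
  "larrow (Dir a) = a"
| "larrow (Inv a) = a"

definition inv_walk :: "'a letter list \<Rightarrow> 'a letter list" where
  "inv_walk w = rev (map linv w)"

definition rel_free_path :: "'a set \<Rightarrow> ('a \<Rightarrow> 'v) \<Rightarrow> ('a \<Rightarrow> 'v) \<Rightarrow> ('a \<times> 'a) set \<Rightarrow> 'a list \<Rightarrow> bool" where
  "rel_free_path Q1 s t R p \<longleftrightarrow> set p \<subseteq> Q1 \<and>
     (\<forall>i. Suc i < length p \<longrightarrow> t (p ! i) = s (p ! Suc i) \<and> (p ! i, p ! Suc i) \<notin> R)"

definition fd_gentle :: "'v set \<Rightarrow> 'a set \<Rightarrow> ('a \<Rightarrow> 'v) \<Rightarrow> ('a \<Rightarrow> 'v) \<Rightarrow> ('a \<times> 'a) set \<Rightarrow> bool" where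
  "fd_gentle Q0 Q1 s t R \<longleftrightarrow>
     finite Q0 \<and> finite Q1 \<and>
     (\<forall>a\<in>Q1. s a \<in> Q0 \<and> t a \<in> Q0) \<and>
     R \<subseteq> {(a, b). a \<in> Q1 \<and> b \<in> Q1 \<and> t a = s b} \<and>
     (\<forall>v\<in>Q0. card {a\<in>Q1. s a = v} \<le> 2 \<and> card {a\<in>Q1. t a = v} \<le> 2) \<and>
     (\<forall>b\<in>Q1. card {a\<in>Q1. t a = s b \<and> (a, b) \<notin> R} \<le> 1 \<and>
              card {c\<in>Q1. s c = t b \<and> (b, c) \<notin> R} \<le> 1 \<and>
              card {a\<in>Q1. (a, b) \<in> R} \<le> 1 \<and>
              card {c\<in>Q1. (b, c) \<in> R} \<le> 1) \<and>
     (\<exists>N. \<forall>p. rel_free_path Q1 s t R p \<longrightarrow> length p \<le> N)"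

definition is_string :: "'a set \<Rightarrow> ('a \<Rightarrow> 'v) \<Rightarrow> ('a \<Rightarrow> 'v) \<Rightarrow> ('a \<times> 'a) set \<Rightarrow> 'a letter list \<Rightarrow> bool" where
  "is_string Q1 s t R w \<longleftrightarrow> larrow ` set w \<subseteq> Q1 \<and>
     (\<forall>i. Suc i < length w \<longrightarrow>
        ltgt s t (w ! i) = lsrc s t (w ! Suc i) \<and>
        w ! Suc i \<noteq> linv (w ! i) \<and>
        (\<forall>a b. \<not> (w ! i = Dir a \<and> w ! Suc i = Dir b \<and> (a, b) \<in> R)) \<and>
        (\<forall>a b. \<not> (w ! i = Inv b \<and> w ! Suc i = Inv a \<and> (a, b) \<in> R)))"

definition is_band :: "'a set \<Rightarrow> ('a \<Rightarrow> 'v) \<Rightarrow> ('a \<Rightarrow> 'v) \<Rightarrow> ('a \<times> 'a) set \<Rightarrow> 'a letter list \<Rightarrow> bool" where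
  "is_band Q1 s t R B \<longleftrightarrow> length B \<ge> 1 \<and>
     (\<forall>n\<ge>1. is_string Q1 s t R (concat (replicate n B)))"

definition binf :: "'a letter list \<Rightarrow> int \<Rightarrow> 'a letter" where
  "binf B i = B ! nat (i mod int (length B))"

definition subw :: "'a letter list \<Rightarrow> int \<Rightarrow> nat \<Rightarrow> 'a letter list" where
  "subw B i k = map (\<lambda>j. binf B (i + int j)) [0..<k]"

(* start/end vertex of that subwalk (meaningful also for k = 0) *)
definition subw_start :: "('a \<Rightarrow> 'v) \<Rightarrow> ('a \<Rightarrow> 'v) \<Rightarrow> 'a letter list \<Rightarrow> int \<Rightarrow> 'v" where
  "subw_start s t B i = ltgt s t (binf B (i - 1))"

definition subw_end :: "('a \<Rightarrow> 'v) \<Rightarrow> ('a \<Rightarrow> 'v) \<Rightarrow> 'a letter list \<Rightarrow> int \<Rightarrow> nat \<Rightarrow> 'v" where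
  "subw_end s t B i k = lsrc s t (binf B (i + int k))"

definition on_top :: "'a letter list \<Rightarrow> int \<Rightarrow> nat \<Rightarrow> bool" where
  "on_top B i k \<longleftrightarrow> \<not> is_direct (binf B (i - 1)) \<and> is_direct (binf B (i + int k))"

definition at_bottom :: "'a letter list \<Rightarrow> int \<Rightarrow> nat \<Rightarrow> bool" where
  "at_bottom B i k \<longleftrightarrow> is_direct (binf B (i - 1)) \<and> \<not> is_direct (binf B (i + int k))"

(* the subwalks (i,k) and (j,k) of B^infinity are equal as strings:
   equal as walks, or one is the inverse walk of the other (with matching endpoints,
   which matters only for length 0) *)
definition equal_as_strings :: "('a \<Rightarrow> 'v) \<Rightarrow> ('a \<Rightarrow> 'v) \<Rightarrow> 'a letter list \<Rightarrow> int \<Rightarrow> int \<Rightarrow> nat \<Rightarrow> bool" where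
  "equal_as_strings s t B i j k \<longleftrightarrow>
     (subw B j k = subw B i k \<and> subw_start s t B j = subw_start s t B i) \<or>
     (subw B j k = inv_walk (subw B i k) \<and> subw_start s t B j = subw_end s t B i k)"

definition auto_reaching :: "('a \<Rightarrow> 'v) \<Rightarrow> ('a \<Rightarrow> 'v) \<Rightarrow> 'a letter list \<Rightarrow> int \<Rightarrow> int \<Rightarrow> nat \<Rightarrow> bool" where
  "auto_reaching s t B i j k \<longleftrightarrow> on_top B i k \<and> at_bottom B j k \<and> equal_as_strings s t B i j k"

end

theory Submission
  imports Defs
begin

lemma binf_shift: "binf B (x + int (length B)) = binf B x"
  by (simp add: binf_def)

lemma subw_len[simp]: "length (subw B i k) = k"
  by (simp add: subw_def)

lemma subw_nth: "r < k \<Longrightarrow> subw B i k ! r = binf B (i + int r)"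
  by (simp add: subw_def)

lemma is_direct_linv: "is_direct (linv x) = (\<not> is_direct x)"
  by (cases x) auto

theorem mainTheorem6:
  fixes Q0 :: "'v set" and Q1 :: "'a set" and s t :: "'a \<Rightarrow> 'v"
    and R :: "('a \<times> 'a) set" and B :: "'a letter list"
    and i j :: int and k :: nat
  assumes "fd_gentle Q0 Q1 s t R"
    and "is_band Q1 s t R B"
    and "auto_reaching s t B i j k"
  shows "length (subw B i k) + 2 \<le> length B"
proof (rule ccontr)
  define m where "m = length B"
  have m1: "m \<ge> 1" using assms(2) by (simp add: is_band_def m_def)
  assume "\<not> length (subw B i k) + 2 \<le> length B"
  hence km: "k + 1 \<ge> m" by (simp add: m_def)
  have top: "\<not> is_direct (binf B (i - 1))" "is_direct (binf B (i + int k))"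
    and bot: "is_direct (binf B (j - 1))" "\<not> is_direct (binf B (j + int k))"
    and eq: "equal_as_strings s t B i j k"
    using assms(3) by (auto simp: auto_reaching_def on_top_def at_bottom_def)
  show False
  proof (cases "k + 1 = m")
    case True
    have "i + int k = (i - 1) + int (length B)" using True m_def by simp
    hence "binf B (i + int k) = binf B (i - 1)" using binf_shift by metis
    thus False using top by simp
  next
    case False
    hence kgt: "m - 1 < k" using km m1 by simp
    have jm: "binf B (j + int (m - 1)) = binf B (j - 1)"
    proof -
      have "j + int (m - 1) = (j - 1) + int (length B)" using m1 m_def by simp
      thus ?thesis using binf_shift by metis
    qed
    from eq show False
      unfolding equal_as_strings_def
    proof (elim disjE conjE)
      assume h: "subw B j k = subw B i k"
      have "binf B (j + int (m - 1)) = binf B (i + int (m - 1))"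
        using arg_cong[OF h, of "\<lambda>w. w ! (m - 1)"] kgt by (simp add: subw_nth)
      moreover have "binf B (i + int (m - 1)) = binf B (i - 1)"
      proof -
        have "i + int (m - 1) = (i - 1) + int (length B)" using m1 m_def by simp
        thus ?thesis using binf_shift by metis
      qed
      ultimately show False using jm top bot by simp
    next
      assume h: "subw B j k = inv_walk (subw B i k)"
      have "binf B (j + int (m - 1)) = linv (subw B i k ! (k - 1 - (m - 1)))"
        using arg_cong[OF h, of "\<lambda>w. w ! (m - 1)"] kgt
        by (simp add: subw_nth inv_walk_def rev_nth)
      also have "subw B i k ! (k - 1 - (m - 1)) = binf B (i + int (k - m))"
        using kgt m1 by (simp add: subw_nth)
      also have "binf B (i + int (k - m)) = binf B (i + int k)"
      proof -
        have "i + int k = (i + int (k - m)) + int (length B)" using kgt m1 m_def by simp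
        thus ?thesis using binf_shift by metis
      qed
      finally show False using jm top bot is_direct_linv by metis
    qed
  qed
qed

end
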